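(* Let $\Gamma$ be a totally ordered additive abelian group, $E$ a finite set, $r\ge0$, and $\nu\colon\Delta_E^r\to\overline{\Gamma}$ a function with cage $\mathbf{a}=(a_s)_{s\in E}$. Let $\pi\colon E'\to E$ be a map of finite sets with $|\pi^{-1}(s)|=a_s$ for all $s\in E$, and let the multisymmetric lift $M_\pi(\nu)\colon\binom{E'}{r}\to\overline{\Gamma}$ be $M_\pi(\nu)(S')=\nu\big(\sum_{s'\in S'}e_{\pi(s')}\big)$. Then $\nu$ is $M$-convex if and only if $M_\pi(\nu)$ is a valuated matroid of rank $r$ on $E'$.
   Context: $\overline{\Gamma}=\Gamma\sqcup\{\infty\}$ with $\infty$ larger than every element of $\Gamma$. $e_s$ is the standard basis vector of $\mathbb{Z}^E$; $\Delta_E^r=\{\alpha\in\mathbb{Z}^E_{\ge0}\mid\sum_e\alpha_e=r\}$; $\binom{E'}{r}$ is the set of $r$-element subsets of $E'$. The cage of $\nu$ is the tuple $(a_s)_{s\in E}$ where $a_s$ is the smallest non-negative integer with $a_s\geq\alpha_s$ for all $\alpha\in\Delta_E^r$ with $\nu(\alpha)\neq\infty$. An $M$-convex function of rank $r$ is a map $\nu\colon\Delta_E^r\to\overline{\Gamma}$, not identically $\infty$, such that for all $\alpha,\beta\in\Delta_E^r$ and $s\in E$ with $\alpha_s>\beta_s$ there is $t\in E$ with $\beta_t>\alpha_t$ and $\nu(\alpha)+\nu(\beta)\geq\nu(\alpha-e_s+e_t)+\nu(\beta-e_t+e_s)$. A valuated matroid of rank $r$ on a finite set $X$ is a map $\mu\colon\binom{X}{r}\to\overline{\Gamma}$,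 not identically $\infty$, such that for all $S,T\in\binom{X}{r}$ and $s\in S- T$ there is $t\in T- S$ with $\mu(S)+\mu(T)\geq\mu(S-\{s\}\cup\{t\})+\mu(T-\{t\}\cup\{s\})$. *)

theory Defs
  imports Main
begin

datatype 'g ext = Fin 'g | Inf

fun ext_plus :: "'g::linordered_ab_group_add ext \<Rightarrow> 'g ext \<Rightarrow> 'g ext" where
  "ext_plus (Fin a) (Fin b) = Fin (a + b)"
| "ext_plus _ _ = Inf"

fun ext_le :: "'g::linordered_ab_group_add ext \<Rightarrow> 'g ext \<Rightarrow> bool" where
  "ext_le (Fin a) (Fin b) = (a \<le> b)"
| "ext_le _ Inf = True"
| "ext_le Inf (Fin _) = False"

definition ebas :: "'s \<Rightarrow> 's \<Rightarrow> nat" where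
  "ebas s = (\<lambda>t. if t = s then 1 else 0)"

definition Delta :: "'s set \<Rightarrow> nat \<Rightarrow> ('s \<Rightarrow> nat) set" where
  "Delta E r = {\<alpha>. (\<forall>s. s \<notin> E \<longrightarrow> \<alpha> s = 0) \<and> (\<Sum>s\<in>E. \<alpha> s) = r}"

definition cage :: "'s set \<Rightarrow> nat \<Rightarrow> (('s \<Rightarrow> nat) \<Rightarrow> 'g ext) \<Rightarrow> 's \<Rightarrow> nat" where
  "cage E r \<nu> s = (LEAST n. \<forall>\<alpha>\<in>Delta E r. \<nu> \<alpha> \<noteq> Inf \<longrightarrow> \<alpha> s \<le> n)"

definition M_convex :: "'s set \<Rightarrow> nat \<Rightarrow> (('s \<Rightarrow> nat) \<Rightarrow> 'g::linordered_ab_group_add ext) \<Rightarrow> bool" where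
  "M_convex E r \<nu> \<longleftrightarrow>
     (\<exists>\<alpha>\<in>Delta E r. \<nu> \<alpha> \<noteq> Inf) \<and>
     (\<forall>\<alpha>\<in>Delta E r. \<forall>\<beta>\<in>Delta E r. \<forall>s\<in>E. \<alpha> s > \<beta> s \<longrightarrow>
        (\<exists>t\<in>E. \<beta> t > \<alpha> t \<and>
           ext_le (ext_plus (\<nu> (\<lambda>u. \<alpha> u - ebas s u + ebas t u)) (\<nu> (\<lambda>u. \<beta> u - ebas t u + ebas s u)))
                  (ext_plus (\<nu> \<alpha>) (\<nu> \<beta>))))"

definition valuated_matroid :: "'x set \<Rightarrow> nat \<Rightarrow> ('x set \<Rightarrow> 'g::linordered_ab_group_add ext) \<Rightarrow> bool" where
  "valuated_matroid X r \<mu> \<longleftrightarrow>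
     (\<exists>S. S \<subseteq> X \<and> card S = r \<and> \<mu> S \<noteq> Inf) \<and>
     (\<forall>S T. S \<subseteq> X \<and> card S = r \<and> T \<subseteq> X \<and> card T = r \<longrightarrow>
        (\<forall>s\<in>S - T. \<exists>t\<in>T - S.
           ext_le (ext_plus (\<mu> (S - {s} \<union> {t})) (\<mu> (T - {t} \<union> {s}))) (ext_plus (\<mu> S) (\<mu> T))))"

definition msym_lift :: "('t \<Rightarrow> 's) \<Rightarrow> (('s \<Rightarrow> nat) \<Rightarrow> 'g ext) \<Rightarrow> 't set \<Rightarrow> 'g ext" where
  "msym_lift \<pi> \<nu> S' = \<nu> (\<lambda>u. \<Sum>s'\<in>S'. ebas (\<pi> s') u)"

end

theory Submission
  imports Defs
begin

lemma ext_le_refl: "ext_le x x"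
  by (cases x) auto

lemma ext_plus_Inf1[simp]: "ext_plus Inf x = Inf" by (cases x) auto
lemma ext_plus_Inf2[simp]: "ext_plus x Inf = Inf" by (cases x) auto
lemma ext_le_Inf[simp]: "ext_le x Inf" by (cases x) auto

definition cnt :: "('t \<Rightarrow> 's) \<Rightarrow> 't set \<Rightarrow> 's \<Rightarrow> nat" where
  "cnt \<pi> S u = card {x\<in>S. \<pi> x = u}"

lemma vec_cnt: "finite S \<Longrightarrow> (\<lambda>u. \<Sum>s'\<in>S. ebas (\<pi> s') u) = cnt \<pi> S"
proof
  fix u assume "finite S"
  have "(\<Sum>s'\<in>S. ebas (\<pi> s') u) = (\<Sum>s'\<in>S. if \<pi> s' = u then 1 else 0)"
    by (simp add: ebas_def eq_commute)
  also have "\<dots> = card {x\<in>S. \<pi> x = u}"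
    using \<open>finite S\<close> by (simp add: sum.inter_filter[symmetric])
  finally show "(\<Sum>s'\<in>S. ebas (\<pi> s') u) = cnt \<pi> S u" by (simp add: cnt_def)
qed

lemma lift_eq: "finite S \<Longrightarrow> msym_lift \<pi> \<nu> S = \<nu> (cnt \<pi> S)"
  by (simp add: msym_lift_def vec_cnt)

lemma cnt_exch:
  assumes "finite S" "s \<in> S" "t \<notin> S"
  shows "cnt \<pi> (S - {s} \<union> {t}) = (\<lambda>u. cnt \<pi> S u - ebas (\<pi> s) u + ebas (\<pi> t) u)"
proof
  fix u
  have f: "finite {x\<in>S. \<pi> x = u}" using assms by auto
  have e: "{x\<in>S - {s} \<union> {t}. \<pi> x = u} =
     (if \<pi> t = u then insert t ({x\<in>S. \<pi> x = u} - {s}) else ({x\<in>S. \<pi> x = u} - {s}))"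
    using assms by auto
  have p: "\<pi> s = u \<Longrightarrow> card {x\<in>S. \<pi> x = u} \<ge> 1"
    using f assms by (metis (mono_tags, lifting) One_nat_def Suc_leI card_gt_0_iff empty_iff mem_Collect_eq)
  show "cnt \<pi> (S - {s} \<union> {t}) u = cnt \<pi> S u - ebas (\<pi> s) u + ebas (\<pi> t) u"
    unfolding cnt_def e using f assms p
    by (auto simp: ebas_def card_Diff_singleton_if)
qed

locale L =
  fixes E :: "'s set" and E' :: "'t set" and r :: nat
    and \<nu> :: "('s \<Rightarrow> nat) \<Rightarrow> 'g::linordered_ab_group_add ext"
    and \<pi> :: "'t \<Rightarrow> 's"
  assumes fE: "finite E" and fE': "finite E'"
    and piE: "\<forall>s'\<in>E'. \<pi> s' \<in> E"
    and cf: "\<forall>s\<in>E. card {s'\<in>E'. \<pi> s' = s} = cage E r \<nu> s"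
begin

definition F where "F u = {s'\<in>E'. \<pi> s' = u}"
definition Ls where "Ls u = (SOME xs. distinct xs \<and> set xs = F u)"
definition R where "R \<gamma> = (\<Union>u\<in>E. set (take (\<gamma> u) (Ls u)))"

lemma Ls: "distinct (Ls u) \<and> set (Ls u) = F u"
proof -
  have "finite (F u)" using fE' by (simp add: F_def)
  then have "\<exists>xs. distinct xs \<and> set xs = F u" using finite_distinct_list by blast
  then show ?thesis unfolding Ls_def by (rule someI_ex)
qed

lemma len_Ls: "length (Ls u) = card (F u)"
  using Ls distinct_card by metis

lemma Delta_le: "\<alpha> \<in> Delta E r \<Longrightarrow> \<alpha> u \<le> r"
proof (cases "u \<in> E")
  case True
  assume "\<alpha> \<in> Delta E r"
  then have "(\<Sum>s\<in>E. \<alpha> s) = r" by (simp add: Delta_def)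
  moreover have "\<alpha> u \<le> (\<Sum>s\<in>E. \<alpha> s)" using True fE by (simp add: member_le_sum)
  ultimately show ?thesis by simp
next
  case False
  assume "\<alpha> \<in> Delta E r" then show ?thesis using False by (simp add: Delta_def)
qed

lemma cage_bound:
  assumes "\<alpha> \<in> Delta E r" "\<nu> \<alpha> \<noteq> Inf" "u \<in> E"
  shows "\<alpha> u \<le> card (F u)"
proof -
  have ex: "\<forall>\<alpha>\<in>Delta E r. \<nu> \<alpha> \<noteq> Inf \<longrightarrow> \<alpha> u \<le> r" using Delta_le by blast
  have "\<forall>\<alpha>\<in>Delta E r. \<nu> \<alpha> \<noteq> Inf \<longrightarrow> \<alpha> u \<le> cage E r \<nu> u"
    unfolding cage_def by (rule LeastI[of _ r], rule ex)
  then show ?thesis using assms cf by (simp add: F_def)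
qed

lemma R_sub: "R \<gamma> \<subseteq> E'"
  unfolding R_def using Ls by (auto simp: F_def dest: in_set_takeD)

lemma R_fib:
  assumes "u \<in> E"
  shows "{x\<in>R \<gamma>. \<pi> x = u} = set (take (\<gamma> u) (Ls u))"
proof
  show "{x\<in>R \<gamma>. \<pi> x = u} \<subseteq> set (take (\<gamma> u) (Ls u))"
  proof
    fix x assume "x \<in> {x\<in>R \<gamma>. \<pi> x = u}"
    then obtain v where v: "v \<in> E" "x \<in> set (take (\<gamma> v) (Ls v))" "\<pi> x = u"
      by (auto simp: R_def)
    then have "x \<in> F v" using Ls by (metis in_set_takeD)
    then have "v = u" using v by (simp add: F_def)
    then show "x \<in> set (take (\<gamma> u) (Ls u))" using v by simp
  qed
next
  show "set (take (\<gamma> u) (Ls u)) \<subseteq> {x\<in>R \<gamma>. \<pi> x = u}"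
    using assms Ls by (auto simp: R_def F_def dest: in_set_takeD)
qed

lemma cnt_R:
  assumes "\<forall>u\<in>E. \<gamma> u \<le> card (F u)" "\<forall>u. u \<notin> E \<longrightarrow> \<gamma> u = 0"
  shows "cnt \<pi> (R \<gamma>) = \<gamma>"
proof
  fix u
  show "cnt \<pi> (R \<gamma>) u = \<gamma> u"
  proof (cases "u \<in> E")
    case True
    have "distinct (take (\<gamma> u) (Ls u))" using Ls by simp
    then have "card (set (take (\<gamma> u) (Ls u))) = length (take (\<gamma> u) (Ls u))" by (rule distinct_card)
    also have "\<dots> = \<gamma> u" using len_Ls[of u] assms(1) True by simp
    finally have "card (set (take (\<gamma> u) (Ls u))) = \<gamma> u" .
    then show ?thesis using R_fib[OF True] by (simp add: cnt_def)
  next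
    case False
    have e: "{x\<in>R \<gamma>. \<pi> x = u} = {}" using R_sub piE False by auto
    show ?thesis using assms(2) False unfolding cnt_def e by simp
  qed
qed

lemma cnt_Delta:
  assumes "S \<subseteq> E'"
  shows "cnt \<pi> S \<in> Delta E (card S)"
proof -
  have fS: "finite S" using assms fE' finite_subset by blast
  have "S = (\<Union>u\<in>E. {x\<in>S. \<pi> x = u})" using assms piE by auto
  then have "card S = card (\<Union>u\<in>E. {x\<in>S. \<pi> x = u})" by simp
  also have "\<dots> = (\<Sum>u\<in>E. card {x\<in>S. \<pi> x = u})"
    by (rule card_UN_disjoint) (use fE fS in auto)
  finally have "(\<Sum>u\<in>E. cnt \<pi> S u) = card S" by (simp add: cnt_def)
  moreover have "\<forall>u. u \<notin> E \<longrightarrow> cnt \<pi> S u = 0"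
  proof (intro allI impI)
    fix u assume "u \<notin> E"
    then have e: "{x\<in>S. \<pi> x = u} = {}" using assms piE by auto
    show "cnt \<pi> S u = 0" unfolding cnt_def e by simp
  qed
  ultimately show ?thesis by (simp add: Delta_def)
qed

lemma R_props:
  assumes "\<gamma> \<in> Delta E r" "\<nu> \<gamma> \<noteq> Inf"
  shows "R \<gamma> \<subseteq> E'" "cnt \<pi> (R \<gamma>) = \<gamma>" "card (R \<gamma>) = r" "finite (R \<gamma>)"
proof -
  show 1: "R \<gamma> \<subseteq> E'" by (rule R_sub)
  show 2: "cnt \<pi> (R \<gamma>) = \<gamma>"
    by (rule cnt_R) (use cage_bound assms in \<open>auto simp: Delta_def\<close>)
  have "cnt \<pi> (R \<gamma>) \<in> Delta E (card (R \<gamma>))" by (rule cnt_Delta[OF 1])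
  then show "card (R \<gamma>) = r" using 2 assms(1) by (simp add: Delta_def)
  show "finite (R \<gamma>)" using 1 fE' finite_subset by blast
qed

lemma R_diff:
  assumes "x \<in> R \<alpha>" "x \<notin> R \<beta>"
  shows "\<beta> (\<pi> x) < \<alpha> (\<pi> x)"
proof -
  have xE: "\<pi> x \<in> E" using assms R_sub piE by blast
  have a: "x \<in> set (take (\<alpha> (\<pi> x)) (Ls (\<pi> x)))" using R_fib[OF xE, of \<alpha>] assms by auto
  have b: "x \<notin> set (take (\<beta> (\<pi> x)) (Ls (\<pi> x)))" using R_fib[OF xE, of \<beta>] assms by auto
  show ?thesis
  proof (rule ccontr)
    assume "\<not> ?thesis"
    then have "set (take (\<alpha> (\<pi> x)) (Ls (\<pi> x))) \<subseteq> set (take (\<beta> (\<pi> x)) (Ls (\<pi> x)))"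
      by (simp add: set_take_subset_set_take)
    then show False using a b by blast
  qed
qed

lemma dir1:
  assumes "M_convex E r \<nu>"
  shows "valuated_matroid E' r (msym_lift \<pi> \<nu>)"
  unfolding valuated_matroid_def
proof (intro conjI allI impI ballI)
  obtain \<alpha> where a: "\<alpha> \<in> Delta E r" "\<nu> \<alpha> \<noteq> Inf" using assms by (auto simp: M_convex_def)
  show "\<exists>S\<subseteq>E'. card S = r \<and> msym_lift \<pi> \<nu> S \<noteq> Inf"
    using R_props[OF a] a lift_eq by metis
next
  fix S T s
  assume ST: "S \<subseteq> E' \<and> card S = r \<and> T \<subseteq> E' \<and> card T = r" and s: "s \<in> S - T"
  have fS: "finite S" and fT: "finite T" using ST fE' finite_subset by blast+
  have TS: "T - S \<noteq> {}"
  proof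
    assume "T - S = {}"
    then have "T \<subseteq> S" by blast
    then have "T = S" using card_subset_eq fS ST by metis
    then show False using s by blast
  qed
  show "\<exists>t\<in>T - S. ext_le (ext_plus (msym_lift \<pi> \<nu> (S - {s} \<union> {t})) (msym_lift \<pi> \<nu> (T - {t} \<union> {s})))
            (ext_plus (msym_lift \<pi> \<nu> S) (msym_lift \<pi> \<nu> T))"
  proof (cases "\<nu> (cnt \<pi> S) = Inf \<or> \<nu> (cnt \<pi> T) = Inf")
    case True
    then obtain t where "t \<in> T - S" using TS by blast
    have "ext_plus (msym_lift \<pi> \<nu> S) (msym_lift \<pi> \<nu> T) = Inf"
      using True lift_eq[OF fS, of \<pi> \<nu>] lift_eq[OF fT, of \<pi> \<nu>] by auto
    then show ?thesis using \<open>t \<in> T - S\<close> by auto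
  next
    case False
    define \<alpha> where "\<alpha> = cnt \<pi> S"
    define \<beta> where "\<beta> = cnt \<pi> T"
    have aD: "\<alpha> \<in> Delta E r" using cnt_Delta ST \<alpha>_def by metis
    have bD: "\<beta> \<in> Delta E r" using cnt_Delta ST \<beta>_def by metis
    define s0 where "s0 = \<pi> s"
    have s0E: "s0 \<in> E" using s ST piE s0_def by blast
    show ?thesis
    proof (cases "\<alpha> s0 > \<beta> s0")
      case True
      obtain t0 where t0: "t0 \<in> E" "\<beta> t0 > \<alpha> t0"
        "ext_le (ext_plus (\<nu> (\<lambda>u. \<alpha> u - ebas s0 u + ebas t0 u)) (\<nu> (\<lambda>u. \<beta> u - ebas t0 u + ebas s0 u)))
                  (ext_plus (\<nu> \<alpha>) (\<nu> \<beta>))"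
        using assms aD bD s0E True unfolding M_convex_def by blast
      have "\<not> {x\<in>T. \<pi> x = t0} \<subseteq> {x\<in>S. \<pi> x = t0}"
      proof
        assume "{x\<in>T. \<pi> x = t0} \<subseteq> {x\<in>S. \<pi> x = t0}"
        then have "card {x\<in>T. \<pi> x = t0} \<le> card {x\<in>S. \<pi> x = t0}" using fS by (simp add: card_mono)
        then show False using t0(2) by (simp add: \<alpha>_def \<beta>_def cnt_def)
      qed
      then obtain t where t: "t \<in> T" "t \<notin> S" "\<pi> t = t0" by blast
      have e1: "cnt \<pi> (S - {s} \<union> {t}) = (\<lambda>u. \<alpha> u - ebas s0 u + ebas t0 u)"
        using cnt_exch[OF fS, of s t \<pi>] s t by (simp add: \<alpha>_def s0_def)
      have e2: "cnt \<pi> (T - {t} \<union> {s}) = (\<lambda>u. \<beta> u - ebas t0 u + ebas s0 u)"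
        using cnt_exch[OF fT, of t s \<pi>] s t by (simp add: \<beta>_def s0_def)
      have f1: "finite (S - {s} \<union> {t})" "finite (T - {t} \<union> {s})" using fS fT by auto
      have m1: "msym_lift \<pi> \<nu> (S - {s} \<union> {t}) = \<nu> (\<lambda>u. \<alpha> u - ebas s0 u + ebas t0 u)"
        by (simp only: lift_eq[OF f1(1)] e1)
      have m2: "msym_lift \<pi> \<nu> (T - {t} \<union> {s}) = \<nu> (\<lambda>u. \<beta> u - ebas t0 u + ebas s0 u)"
        by (simp only: lift_eq[OF f1(2)] e2)
      have m3: "msym_lift \<pi> \<nu> S = \<nu> \<alpha>" by (simp only: lift_eq[OF fS] \<alpha>_def)
      have m4: "msym_lift \<pi> \<nu> T = \<nu> \<beta>" by (simp only: lift_eq[OF fT] \<beta>_def)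
      have tt: "t \<in> T - S" using t by blast
      show ?thesis apply (rule bexI[OF _ tt]) apply (unfold m1 m2 m3 m4) by (rule t0(3))
    next
      case False
      have "\<not> {x\<in>T. \<pi> x = s0} \<subseteq> {x\<in>S. \<pi> x = s0} - {s}"
      proof
        assume "{x\<in>T. \<pi> x = s0} \<subseteq> {x\<in>S. \<pi> x = s0} - {s}"
        then have "card {x\<in>T. \<pi> x = s0} \<le> card ({x\<in>S. \<pi> x = s0} - {s})" using fS by (simp add: card_mono)
        also have "\<dots> < card {x\<in>S. \<pi> x = s0}"
          using fS s s0_def by (intro psubset_card_mono) auto
        finally show False using False by (simp add: \<alpha>_def \<beta>_def cnt_def)
      qed
      then obtain t where t: "t \<in> T" "t \<notin> S" "\<pi> t = s0" using s by blast
      have e1: "cnt \<pi> (S - {s} \<union> {t}) = (\<lambda>u. \<alpha> u - ebas s0 u + ebas s0 u)"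
        using cnt_exch[OF fS, of s t \<pi>] s t by (simp add: \<alpha>_def s0_def)
      have e2: "cnt \<pi> (T - {t} \<union> {s}) = (\<lambda>u. \<beta> u - ebas s0 u + ebas s0 u)"
        using cnt_exch[OF fT, of t s \<pi>] s t by (simp add: \<beta>_def s0_def)
      have pa: "\<alpha> s0 \<ge> 1"
      proof -
        have "s \<in> {x\<in>S. \<pi> x = s0}" using s s0_def by auto
        then have "card {x\<in>S. \<pi> x = s0} > 0" using fS card_gt_0_iff by fastforce
        then show ?thesis by (simp add: \<alpha>_def cnt_def)
      qed
      have pb: "\<beta> s0 \<ge> 1" using pa False by simp
      have "(\<lambda>u. \<alpha> u - ebas s0 u + ebas s0 u) = \<alpha>" using pa by (auto simp: ebas_def)
      moreover have "(\<lambda>u. \<beta> u - ebas s0 u + ebas s0 u) = \<beta>" using pb by (auto simp: ebas_def)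
      ultimately have e1': "cnt \<pi> (S - {s} \<union> {t}) = \<alpha>" and e2': "cnt \<pi> (T - {t} \<union> {s}) = \<beta>"
        using e1 e2 by simp_all
      have f1: "finite (S - {s} \<union> {t})" "finite (T - {t} \<union> {s})" using fS fT by auto
      have m1: "msym_lift \<pi> \<nu> (S - {s} \<union> {t}) = \<nu> \<alpha>"
        by (simp only: lift_eq[OF f1(1)] e1')
      have m2: "msym_lift \<pi> \<nu> (T - {t} \<union> {s}) = \<nu> \<beta>"
        by (simp only: lift_eq[OF f1(2)] e2')
      have m3: "msym_lift \<pi> \<nu> S = \<nu> \<alpha>" by (simp only: lift_eq[OF fS] \<alpha>_def)
      have m4: "msym_lift \<pi> \<nu> T = \<nu> \<beta>" by (simp only: lift_eq[OF fT] \<beta>_def)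
      have tt: "t \<in> T - S" using t by blast
      show ?thesis apply (rule bexI[OF _ tt]) apply (unfold m1 m2 m3 m4) by (rule ext_le_refl)
    qed
  qed
qed

lemma dir2:
  assumes "valuated_matroid E' r (msym_lift \<pi> \<nu>)"
  shows "M_convex E r \<nu>"
  unfolding M_convex_def
proof (intro conjI ballI impI)
  obtain S where S: "S \<subseteq> E'" "card S = r" "msym_lift \<pi> \<nu> S \<noteq> Inf"
    using assms by (auto simp: valuated_matroid_def)
  have fS: "finite S" using S fE' finite_subset by blast
  show "\<exists>\<alpha>\<in>Delta E r. \<nu> \<alpha> \<noteq> Inf"
    using cnt_Delta[OF S(1)] S lift_eq[OF fS] by metis
next
  fix \<alpha> \<beta> s0
  assume aD: "\<alpha> \<in> Delta E r" and bD: "\<beta> \<in> Delta E r" and s0E: "s0 \<in> E" and lt: "\<beta> s0 < \<alpha> s0"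
  have ex: "\<exists>t\<in>E. \<alpha> t < \<beta> t"
  proof (rule ccontr)
    assume "\<not> ?thesis"
    then have "\<forall>t\<in>E. \<beta> t \<le> \<alpha> t" by auto
    then have "(\<Sum>t\<in>E. \<beta> t) < (\<Sum>t\<in>E. \<alpha> t)" using sum_strict_mono_ex1[OF fE] lt s0E by blast
    then show False using aD bD by (simp add: Delta_def)
  qed
  show "\<exists>t\<in>E. \<alpha> t < \<beta> t \<and>
           ext_le (ext_plus (\<nu> (\<lambda>u. \<alpha> u - ebas s0 u + ebas t u)) (\<nu> (\<lambda>u. \<beta> u - ebas t u + ebas s0 u)))
            (ext_plus (\<nu> \<alpha>) (\<nu> \<beta>))"
  proof (cases "\<nu> \<alpha> = Inf \<or> \<nu> \<beta> = Inf")
    case True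
    then show ?thesis using ex by auto
  next
    case False
    then have na: "\<nu> \<alpha> \<noteq> Inf" and nb: "\<nu> \<beta> \<noteq> Inf" by auto
    define S where "S = R \<alpha>"
    define T where "T = R \<beta>"
    note PS = R_props[OF aD na, folded S_def]
    note PT = R_props[OF bD nb, folded T_def]
    have "\<not> {x\<in>S. \<pi> x = s0} \<subseteq> {x\<in>T. \<pi> x = s0}"
    proof
      assume "{x\<in>S. \<pi> x = s0} \<subseteq> {x\<in>T. \<pi> x = s0}"
      then have "card {x\<in>S. \<pi> x = s0} \<le> card {x\<in>T. \<pi> x = s0}" using PT(4) by (simp add: card_mono)
      then have "cnt \<pi> S s0 \<le> cnt \<pi> T s0" by (simp add: cnt_def)
      then show False using PS(2) PT(2) lt by simp
    qed
    then obtain s where s: "s \<in> S" "s \<notin> T" "\<pi> s = s0" by blast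
    obtain t where t: "t \<in> T - S" and ineq:
      "ext_le (ext_plus (msym_lift \<pi> \<nu> (S - {s} \<union> {t})) (msym_lift \<pi> \<nu> (T - {t} \<union> {s})))
            (ext_plus (msym_lift \<pi> \<nu> S) (msym_lift \<pi> \<nu> T))"
      using assms PS PT s unfolding valuated_matroid_def by blast
    define t0 where "t0 = \<pi> t"
    have t0E: "t0 \<in> E" using t PT(1) piE t0_def by blast
    have lt2: "\<alpha> t0 < \<beta> t0" using R_diff[of t \<beta> \<alpha>] t by (simp add: S_def T_def t0_def)
    have e1: "cnt \<pi> (S - {s} \<union> {t}) = (\<lambda>u. \<alpha> u - ebas s0 u + ebas t0 u)"
      using cnt_exch[OF PS(4), of s t \<pi>] s t PS(2) by (simp add: t0_def)
    have e2: "cnt \<pi> (T - {t} \<union> {s}) = (\<lambda>u. \<beta> u - ebas t0 u + ebas s0 u)"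
      using cnt_exch[OF PT(4), of t s \<pi>] s t PT(2) by (simp add: t0_def)
    have f1: "finite (S - {s} \<union> {t})" "finite (T - {t} \<union> {s})" using PS(4) PT(4) by auto
    have m1: "msym_lift \<pi> \<nu> (S - {s} \<union> {t}) = \<nu> (\<lambda>u. \<alpha> u - ebas s0 u + ebas t0 u)"
      by (simp only: lift_eq[OF f1(1)] e1)
    have m2: "msym_lift \<pi> \<nu> (T - {t} \<union> {s}) = \<nu> (\<lambda>u. \<beta> u - ebas t0 u + ebas s0 u)"
      by (simp only: lift_eq[OF f1(2)] e2)
    have m3: "msym_lift \<pi> \<nu> S = \<nu> \<alpha>" by (simp only: lift_eq[OF PS(4)] PS(2))
    have m4: "msym_lift \<pi> \<nu> T = \<nu> \<beta>" by (simp only: lift_eq[OF PT(4)] PT(2))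
    have ineq': "ext_le (ext_plus (\<nu> (\<lambda>u. \<alpha> u - ebas s0 u + ebas t0 u)) (\<nu> (\<lambda>u. \<beta> u - ebas t0 u + ebas s0 u)))
            (ext_plus (\<nu> \<alpha>) (\<nu> \<beta>))" using ineq unfolding m1 m2 m3 m4 .
    show ?thesis apply (rule bexI[of _ t0]) apply (rule conjI[OF lt2 ineq']) by (rule t0E)
  qed
qed

end

theorem proposition1p4:
  fixes E :: "'s set" and E' :: "'t set" and r :: nat
    and \<nu> :: "('s \<Rightarrow> nat) \<Rightarrow> 'g::linordered_ab_group_add ext"
    and \<pi> :: "'t \<Rightarrow> 's"
  assumes "finite E" and "finite E'"
    and "\<forall>s'\<in>E'. \<pi> s' \<in> E"
    and "\<forall>s\<in>E. card {s'\<in>E'. \<pi> s' = s} = cage E r \<nu> s"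
  shows "M_convex E r \<nu> \<longleftrightarrow> valuated_matroid E' r (msym_lift \<pi> \<nu>)"
proof -
  interpret L E E' r \<nu> \<pi> using assms by unfold_locales
  show ?thesis using dir1 dir2 by blast
qed

end
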